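(* Let $n\in\mathbf{N}$, $b\in\mathbf{N}$ and $\ell\in\mathbf{N}$. There exists $C>0$ such that for all $t\ge1$ $$\|m^2_{b,\ell,L}(\cdot,t)\|_{L^2(\mathbf{R}^n_\xi)}\le\begin{cases}Ct^{2(b-1)-1}e^{-t/2}+Ct^{-\frac n4-\ell},& b\ge2,\\ Ce^{-t/2}+Ct^{-\frac n4-\ell},& b=1.\end{cases}$$
   Context: Expressions $\cos(t\sqrt z)$, $\sin(t\sqrt z)/\sqrt z$ denote the entire functions $\sum_m(-1)^mt^{2m}z^m/(2m)!$, $\sum_m(-1)^mt^{2m+1}z^m/(2m+1)!$ of $z\in\mathbf{R}$. For $r\ge0$, $c\in\mathbf{R}$, $a\in[0,1]$ with $4ar^2<1$, $t>0$: $f(r,c,t)=\cos(t\sqrt{r^2-c})$, $h(r,a,t)=\frac{1}{\sqrt{1-4ar^2}}\exp(-\frac{2tr^2}{1+\sqrt{1-4ar^2}})$. For $\xi\neq0$: $W^2_b(\xi,t)=2t^{-1}\sum_{k=0}^{b-2}(\frac14)^k\frac1{k!}\partial_c^{k+1}f(|\xi|,0,t)$ if $b\ge2$ and $W^2_1\equiv0$; $D^2_\ell(\xi,t)=\sum_{k=0}^{\ell-1}\frac1{k!}\partial_a^kh(|\xi|,0,t)$. Let $\chi_L$ be a smooth function on $[0,\infty)$ with $\chi_L(r)=0$ for $r\ge\frac13$ and $\chi_L(r)=1$ for $r\le\frac14$. Define $m^2_{b,\ell,L}(\xi,t)=\chi_L(|\xi|)\Big[e^{-t/2}\frac{\sin(t\sqrt{|\xi|^2-1/4})}{\sqrt{|\xi|^2-1/4}}-e^{-t/2}W^2_b(\xi,t)-D^2_\ell(\xi,t)\Big]$.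 *)

theory Defs
  imports "HOL-Analysis.Analysis"
begin

text \<open>The entire functions cos(t sqrt z) and sin(t sqrt z)/sqrt z of z, given by their power series.\<close>
definition cos_sqrt :: "real \<Rightarrow> real \<Rightarrow> real" where
  "cos_sqrt t z = (\<Sum>m. (-1)^m * t^(2*m) * z^m / fact (2*m))"

definition sinc_sqrt :: "real \<Rightarrow> real \<Rightarrow> real" where
  "sinc_sqrt t z = (\<Sum>m. (-1)^m * t^(2*m+1) * z^m / fact (2*m+1))"

definition f_fun :: "real \<Rightarrow> real \<Rightarrow> real \<Rightarrow> real" where
  "f_fun r c t = cos_sqrt t (r^2 - c)"

definition h_fun :: "real \<Rightarrow> real \<Rightarrow> real \<Rightarrow> real" where
  "h_fun r a t = 1 / sqrt (1 - 4*a*r^2) * exp (- (2*t*r^2) / (1 + sqrt (1 - 4*a*r^2)))"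

definition W2 :: "nat \<Rightarrow> real \<Rightarrow> real \<Rightarrow> real" where
  "W2 b r t = (if b \<ge> 2 then
     2 / t * (\<Sum>k\<le>b-2. (1/4)^k / fact k * (deriv ^^ (k+1)) (\<lambda>c. f_fun r c t) 0)
   else 0)"

definition D2 :: "nat \<Rightarrow> real \<Rightarrow> real \<Rightarrow> real" where
  "D2 l r t = (\<Sum>k<l. 1 / fact k * (deriv ^^ k) (\<lambda>a. h_fun r a t) 0)"

definition m2 :: "(real \<Rightarrow> real) \<Rightarrow> nat \<Rightarrow> nat \<Rightarrow> real^'n \<Rightarrow> real \<Rightarrow> real" where
  "m2 chiL b l \<xi> t = chiL (norm \<xi>) *
     (exp (-t/2) * sinc_sqrt t ((norm \<xi>)^2 - 1/4)
      - exp (-t/2) * W2 b (norm \<xi>) t - D2 l (norm \<xi>) t)"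

text \<open>Smoothness (C-infinity) of a real function on a set S: there is a sequence of
  successive derivatives (one-sided at boundary points, via "within S").\<close>
definition smooth_on_real :: "real set \<Rightarrow> (real \<Rightarrow> real) \<Rightarrow> bool" where
  "smooth_on_real S g \<longleftrightarrow> (\<exists>D. D 0 = g \<and>
     (\<forall>k. \<forall>x\<in>S. (D k has_real_derivative D (Suc k) x) (at x within S)))"

end

theory Submission
  imports Defs "HOL-Complex_Analysis.Complex_Analysis" "HOL-Probability.Probability"
begin


lemma real_higher_deriv_complex:
  fixes g :: "real \<Rightarrow> real" and H :: "complex \<Rightarrow> complex"
  assumes holH: "H holomorphic_on S" and S: "open S"
    and I: "open I" and IS: "\<And>x. x \<in> I \<Longrightarrow> complex_of_real x \<in> S"
    and eq: "\<And>x. x \<in> I \<Longrightarrow> H (of_real x) = of_real (g x)"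
  shows "\<forall>x\<in>I. (deriv ^^ k) H (of_real x) = of_real ((deriv ^^ k) g x)
     \<and> ((deriv ^^ k) g has_real_derivative (deriv ^^ Suc k) g x) (at x)"
proof -
  have main: "(deriv ^^ Suc k) H (of_real x) = of_real ((deriv ^^ Suc k) g x)
     \<and> ((deriv ^^ k) g has_real_derivative (deriv ^^ Suc k) g x) (at x)"
    if IH: "\<forall>y\<in>I. (deriv ^^ k) H (of_real y) = of_real ((deriv ^^ k) g y)" and x: "x \<in> I" for k x
  proof -
    define D where "D = (deriv ^^ Suc k) H (of_real x)"
    have hk: "(deriv ^^ k) H holomorphic_on S" using holH S by (rule holomorphic_higher_deriv)
    have "((deriv ^^ k) H has_field_derivative D) (at (of_real x))"
      unfolding D_def using holomorphic_derivI[OF hk S IS[OF x]] by simp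
    then have "((\<lambda>y. (deriv ^^ k) H (of_real y)) has_vector_derivative D) (at x)"
      by (rule has_vector_derivative_real_field)
    then have d: "((\<lambda>y. complex_of_real ((deriv ^^ k) g y)) has_vector_derivative D) (at x)"
      by (rule has_vector_derivative_transform_within_open[OF _ I x]) (use IH in auto)
    have dr: "((deriv ^^ k) g has_real_derivative Re D) (at x)"
      using has_field_derivative_Re[OF d] by simp
    have "((\<lambda>y. 0::real) has_real_derivative Im D) (at x)"
      using has_field_derivative_Im[OF d] by simp
    then have "Im D = 0" using DERIV_unique DERIV_const by blast
    moreover have "(deriv ^^ Suc k) g x = Re D"
      using DERIV_imp_deriv[OF dr] by simp
    ultimately show ?thesis using dr unfolding D_def[symmetric]
      by (simp add: complex_eq_iff)
  qed
  show ?thesis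
  proof (induction k)
  case 0
  then show ?case using main[of 0] eq by auto
next
  case (Suc k)
  then have IH: "\<forall>y\<in>I. (deriv ^^ Suc k) H (of_real y) = of_real ((deriv ^^ Suc k) g y)"
    using main by blast
  then show ?case using main[OF IH] by blast
qed
qed


lemma cosh_series: "(\<lambda>m. y^(2*m) / fact (2*m)) sums cosh (y::real)"
proof -
  define F where "F n = (if even n then y ^ n /\<^sub>R fact n else 0)" for n :: nat
  have sm: "strict_mono (\<lambda>m::nat. 2*m)" by (simp add: strict_mono_def)
  have z: "F n = 0" if "n \<notin> range (\<lambda>m::nat. 2*m)" for n
    using that unfolding F_def by (auto elim!: evenE)
  have "(\<lambda>m. F (2*m)) sums cosh y \<longleftrightarrow> F sums cosh y"
    by (rule sums_mono_reindex[OF sm]) (rule z)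
  moreover have "F sums cosh y" unfolding F_def by (rule cosh_converges)
  ultimately have "(\<lambda>m. F (2*m)) sums cosh y" by blast
  then show ?thesis by (simp add: F_def divide_inverse mult.commute)
qed

lemma sinh_series: "(\<lambda>m. y^(2*m+1) / fact (2*m+1)) sums sinh (y::real)"
proof -
  define F where "F n = (if even n then 0 else y ^ n /\<^sub>R fact n)" for n :: nat
  have sm: "strict_mono (\<lambda>m::nat. 2*m+1)" by (simp add: strict_mono_def)
  have z: "F n = 0" if "n \<notin> range (\<lambda>m::nat. 2*m+1)" for n
    using that unfolding F_def by (auto elim!: oddE)
  have "(\<lambda>m. F (2*m+1)) sums sinh y \<longleftrightarrow> F sums sinh y"
    by (rule sums_mono_reindex[OF sm]) (rule z)
  moreover have "F sums sinh y" unfolding F_def by (rule sinh_converges)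
  ultimately have "(\<lambda>m. F (2*m+1)) sums sinh y" by blast
  then show ?thesis by (simp add: F_def divide_inverse mult.commute)
qed

definition CS :: "real \<Rightarrow> complex \<Rightarrow> complex" where
  "CS t z = (\<Sum>m. complex_of_real ((-1)^m * t^(2*m) / fact (2*m)) * z^m)"

lemma CS_summable:
  fixes z :: "'a::{real_normed_field,banach}"
  shows "summable (\<lambda>m. of_real ((-1)^m * t^(2*m) / fact (2*m)) * z^m)"
proof (rule summable_comparison_test')
  show "summable (\<lambda>m. (t^2 * norm z)^m /\<^sub>R fact m)" by (rule summable_exp_generic)
  fix m :: nat
  have "norm (of_real ((-1)^m * t^(2*m) / fact (2*m)) * z^m) = \<bar>(-1)^m * t^(2*m) / fact (2*m)\<bar> * norm z ^ m"
    by (simp only: norm_mult norm_of_real norm_power)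
  also have "\<dots> = (t^2)^m * norm z ^ m / fact (2*m)"
    by (simp add: abs_mult power_abs power_mult)
  also have "\<dots> \<le> (t^2)^m * norm z ^ m / fact m"
    by (intro divide_left_mono fact_mono) auto
  also have "\<dots> = (t^2 * norm z)^m /\<^sub>R fact m" by (simp add: power_mult_distrib divide_inverse mult.commute)
  finally show "norm (of_real ((-1)^m * t^(2*m) / fact (2*m)) * z^m) \<le> (t^2 * norm z)^m /\<^sub>R fact m" .
qed

lemma CS_real: "CS t (of_real x) = of_real (cos_sqrt t x)"
proof -
  have "(\<lambda>m. (-1)^m * t^(2*m) * x^m / fact (2*m)) sums cos_sqrt t x"
    unfolding cos_sqrt_def using CS_summable[of t x] by (intro summable_sums) (simp add: field_simps)
  then have "(\<lambda>m. complex_of_real ((-1)^m * t^(2*m) * x^m / fact (2*m))) sums of_real (cos_sqrt t x)"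
    by (subst sums_of_real_iff)
  then have "(\<lambda>m. complex_of_real ((-1)^m * t^(2*m) / fact (2*m)) * (of_real x)^m) sums of_real (cos_sqrt t x)"
    by (simp add: field_simps)
  then show ?thesis unfolding CS_def by (rule sums_unique[symmetric])
qed

lemma CS_bound: "norm (CS t z) \<le> cosh (\<bar>t\<bar> * sqrt (norm z))"
proof -
  have "norm (CS t z) \<le> (\<Sum>m. (\<bar>t\<bar> * sqrt (norm z))^(2*m) / fact (2*m))"
    unfolding CS_def
  proof (rule norm_suminf_le)
    show "summable (\<lambda>m. (\<bar>t\<bar> * sqrt (norm z))^(2*m) / fact (2*m))"
      using cosh_series sums_summable by blast
    fix m
    have "norm (complex_of_real ((-1)^m * t^(2*m) / fact (2*m)) * z^m) = \<bar>(-1)^m * t^(2*m) / fact (2*m)\<bar> * norm z ^ m"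
      by (simp only: norm_mult norm_of_real norm_power)
    also have "\<dots> = (\<bar>t\<bar> * sqrt (norm z))^(2*m) / fact (2*m)"
      by (simp add: abs_mult power_abs power_mult power_mult_distrib)
    finally show "norm (complex_of_real ((-1)^m * t^(2*m) / fact (2*m)) * z^m) \<le> (\<bar>t\<bar> * sqrt (norm z))^(2*m) / fact (2*m)" by simp
  qed
  also have "\<dots> = cosh (\<bar>t\<bar> * sqrt (norm z))" using cosh_series sums_unique by metis
  finally show ?thesis .
qed

lemma CS_holo: "CS t holomorphic_on UNIV"
proof -
  have "\<And>z. CS t field_differentiable at z"
    unfolding CS_def field_differentiable_def
    using termdiffs_strong_converges_everywhere[OF CS_summable] by blast
  then show ?thesis by (simp add: holomorphic_on_def field_differentiable_at_within)
qed

lemma sinc_neg: assumes "q \<noteq> 0" shows "sinc_sqrt t (-(q^2)) = sinh (t*q) / q"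
proof -
  have S: "(\<lambda>m. (t*q)^(2*m+1) / fact (2*m+1) / q) sums (sinh (t*q) / q)"
    by (intro sums_divide sinh_series)
  have E: "(t*q)^(2*m+1) / fact (2*m+1) / q = (-1)^m * t^(2*m+1) * (-(q^2))^m / fact (2*m+1)" for m
  proof -
    have e0: "-(q^2) = (-1) * q^2" by simp
    have e1: "(-(q^2))^m = (-1)^m * q^(2*m)"
      unfolding e0 power_mult_distrib power_mult ..
    have e2: "(-1::real)^m * (-1)^m = 1"
    proof -
      have "(-1::real)^m * (-1)^m = ((-1)*(-1))^m" by (rule power_mult_distrib[symmetric])
      then show ?thesis by simp
    qed
    have "(-1)^m * t^(2*m+1) * (-(q^2))^m / fact (2*m+1) = ((-1)^m * (-1)^m) * t^(2*m+1) * q^(2*m) / fact (2*m+1)"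
      unfolding e1 by (simp add: ac_simps)
    also have "\<dots> = t^(2*m+1) * q^(2*m) / fact (2*m+1)" unfolding e2 by simp
    also have "\<dots> = (t*q)^(2*m+1) / fact (2*m+1) / q"
      using assms by (simp add: power_mult_distrib)
    finally show ?thesis by simp
  qed
  have "(\<lambda>m. (-1)^m * t^(2*m+1) * (-(q^2))^m / fact (2*m+1)) sums (sinh (t*q) / q)"
    using S unfolding E .
  then show ?thesis unfolding sinc_sqrt_def by (rule sums_unique[symmetric])
qed

lemma cosh_le_exp: "cosh (y::real) \<le> exp \<bar>y\<bar>"
proof -
  have a: "exp y \<le> exp \<bar>y\<bar>" by simp
  have b: "exp (-y) \<le> exp \<bar>y\<bar>" by simp
  show ?thesis unfolding cosh_field_def using add_mono[OF a b] by simp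
qed


definition HC :: "real \<Rightarrow> real \<Rightarrow> complex \<Rightarrow> complex" where
 "HC r t a = 1 / csqrt (1 - 4 * a * of_real (r^2)) *
    exp (- of_real (2*t*r^2) / (1 + csqrt (1 - 4 * a * of_real (r^2))))"

lemma Re_w_ge: "Re (1 - 4 * a * of_real (r^2)) \<ge> 1 - 4 * r^2 * norm a"
proof -
  have "Re (4 * a * of_real (r^2)) \<le> norm (4 * a * of_real (r^2))" by (rule complex_Re_le_cmod)
  also have "\<dots> = 4 * r^2 * norm a" by (simp add: norm_mult norm_power)
  finally show ?thesis by simp
qed

lemma Re1csqrt: "Re (1 + csqrt z) \<ge> 1"
  using Re_csqrt[of z] by (simp only: plus_complex.sel one_complex.sel)

lemma HC_holo: "HC r t holomorphic_on {a. 6 * r^2 * norm a < 1}"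
proof -
  have nz: "1 - 4 * (a::complex) * of_real (r^2) \<notin> \<real>\<^sub>\<le>\<^sub>0" if "a \<in> {a::complex. 6 * r^2 * norm a < 1}" for a
  proof -
    have "4 * r^2 * norm a \<le> 6 * r^2 * norm a" by (intro mult_right_mono) auto
    then have pos: "Re (1 - 4 * a * of_real (r^2)) > 0" using that Re_w_ge[where a=a and r=r] by simp
    show ?thesis
    proof
      assume "1 - 4 * a * of_real (r^2) \<in> \<real>\<^sub>\<le>\<^sub>0"
      then obtain ra where "1 - 4 * a * of_real (r^2) = of_real ra" "ra \<le> 0" by (auto elim: nonpos_Reals_cases)
      then show False using pos by (metis Re_complex_of_real not_le)
    qed
  qed
  have nz2: "1 + csqrt (1 - 4 * (a::complex) * of_real (r^2)) \<noteq> 0" for a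
  proof -
    have "Re (1 + csqrt (1 - 4 * a * of_real (r^2))) \<ge> 1" by (rule Re1csqrt)
    then show ?thesis by (metis zero_complex.sel(1) not_one_le_zero)
  qed
  have nz3: "csqrt (1 - 4 * (a::complex) * of_real (r^2)) \<noteq> 0" if "a \<in> {a::complex. 6 * r^2 * norm a < 1}" for a
    using nz[OF that] by auto
  show ?thesis unfolding HC_def
    by (intro holomorphic_intros nz nz2 nz3) auto
qed

lemma open_Sr: "open {a::complex. 6 * r^2 * norm a < 1}"
  by (intro open_Collect_less continuous_intros)

lemma HC_real: assumes "6 * r^2 * \<bar>x\<bar> < 1" shows "HC r t (of_real x) = of_real (h_fun r x t)"
proof -
  have "4 * r^2 * \<bar>x\<bar> \<le> 6 * r^2 * \<bar>x\<bar>" by (intro mult_right_mono) auto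
  moreover have "x * (4*r^2) \<le> \<bar>x\<bar> * (4*r^2)" by (rule mult_right_mono) auto
  ultimately have pos: "1 - 4*x*r^2 > 0" using assms by (simp add: algebra_simps)
  have e: "1 - 4 * complex_of_real x * of_real (r^2) = of_real (1 - 4*x*r^2)" by simp
  have e2: "(- complex_of_real (2*t*r^2) / (1 + complex_of_real (sqrt (1 - 4*x*r^2)))) = of_real (- (2*t*r^2) / (1 + sqrt (1 - 4*x*r^2)))"
    by simp
  have e3: "1 / complex_of_real (sqrt (1 - 4*x*r^2)) = of_real (1 / sqrt (1 - 4*x*r^2))" by simp
  show ?thesis unfolding HC_def h_fun_def e csqrt_of_real[OF less_imp_le[OF pos]] e2 e3 exp_of_real
    by (simp only: of_real_mult)
qed

lemma HC_bound:
  assumes "t \<ge> 0" and a: "4 * r^2 * norm a \<le> 1/2"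
  shows "norm (HC r t a) \<le> sqrt 2 * exp (- (t*r^2) / 3)"
proof -
  define w where "w = 1 - 4 * a * of_real (r^2)"
  define s where "s = csqrt w"
  have nu: "norm (4 * a * of_real (r^2)) \<le> 1/2" using a by (simp add: norm_mult norm_power ac_simps)
  have wl: "norm w \<ge> 1/2"
    using norm_triangle_ineq2[of 1 "4 * a * of_real (r^2)"] nu unfolding w_def by simp
  have wu: "norm w \<le> 3/2"
    using norm_triangle_ineq4[of 1 "4 * a * of_real (r^2)"] nu unfolding w_def by simp
  have n1: "norm (1 / s) \<le> sqrt 2"
  proof -
    have "norm (1/s) = 1 / sqrt (norm w)" unfolding s_def by (simp add: norm_divide)
    also have "\<dots> \<le> 1 / sqrt (1/2)" using wl by (intro divide_left_mono real_sqrt_le_mono mult_pos_pos) auto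
    also have "\<dots> = sqrt 2" by (simp add: real_sqrt_divide)
    finally show ?thesis .
  qed
  have re1: "Re (1 + s) \<ge> 1" unfolding s_def by (rule Re1csqrt)
  have ns: "norm (1 + s) \<le> 1 + sqrt (3/2)"
    proof -
    have "norm s \<le> sqrt (3/2)" unfolding s_def using wu by (simp add: real_sqrt_le_mono)
    then show ?thesis using norm_triangle_ineq[of 1 s] by simp
  qed
  have "sqrt (3/2) \<le> (5/4::real)" 
  proof -
    have "sqrt (3/2) \<le> sqrt ((5/4)^2)" by (rule real_sqrt_le_mono) (simp add: power2_eq_square)
    then show ?thesis by simp
  qed 
  then have n94: "norm (1 + s) \<le> 9/4" using ns by linarith
  have "(norm (1 + s))^2 \<le> (9/4)^2" by (rule power_mono[OF n94]) simp
  then have ns2: "(norm (1 + s))^2 \<le> 6" by (simp add: power2_eq_square)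
  have n1s: "norm (1 + s) \<ge> 1" using re1 complex_Re_le_cmod[of "1+s"] by linarith
  have np: "(norm (1+s))^2 > 0" using n1s by (metis less_le_trans zero_less_one zero_less_power)
  have "Re (1 / (1 + s)) = Re (1 + s) / (norm (1 + s))^2" by (simp add: Re_divide')
  also have "\<dots> \<ge> 1 / 6"
  proof -
    have "1/6 \<le> 1 / (norm (1+s))^2" using ns2 np by (intro divide_left_mono) auto
    also have "\<dots> \<le> Re (1 + s) / (norm (1 + s))^2" using re1 np by (intro divide_right_mono) auto
    finally show ?thesis .
  qed
  finally have reinv: "Re (1 / (1 + s)) \<ge> 1/6" .
  have "Re (- of_real (2*t*r^2) / (1 + s)) = - (2*t*r^2) * Re (1 / (1 + s))"
    by (simp add: Re_divide')
  also have "\<dots> \<le> - (2*t*r^2) * (1/6)" using reinv assms(1)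
    by (intro mult_left_mono_neg) auto
  finally have "norm (exp (- of_real (2*t*r^2) / (1 + s))) \<le> exp (- (t*r^2) / 3)" by simp
  then have "norm (1/s * exp (- of_real (2*t*r^2) / (1 + s))) \<le> sqrt 2 * exp (- (t*r^2) / 3)"
    unfolding norm_mult using n1 by (intro mult_mono) auto
  then show ?thesis unfolding HC_def s_def w_def by simp
qed


lemma pow_le_fact_exp: assumes "0 \<le> (x::real)" shows "x^n \<le> fact n * exp x"
proof -
  have s: "summable (\<lambda>k. x^k /\<^sub>R fact k)" using exp_converges sums_summable by blast
  have "(\<Sum>k\<in>{n}. x^k /\<^sub>R fact k) \<le> (\<Sum>k. x^k /\<^sub>R fact k)"
    by (rule sum_le_suminf[OF s]) (use assms in auto)
  also have "\<dots> = exp x" using exp_converges sums_unique by metis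
  finally have "x^n / fact n \<le> exp x" by (simp add: divide_inverse mult.commute)
  then show ?thesis by (simp add: divide_simps mult.commute)
qed

lemma deriv_const_funpow: "(deriv ^^ Suc k) (\<lambda>_. c::real) = (\<lambda>_. 0)"
proof (induction k)
  case 0 then show ?case by (simp add: fun_eq_iff)
next
  case (Suc k) then show ?case by (simp add: fun_eq_iff)
qed

lemma h_derivs:
  assumes "0 \<le> r" "r \<le> 1/3" and x: "\<bar>x\<bar> < 3/2"
  shows "(deriv ^^ k) (HC r t) (of_real x) = of_real ((deriv ^^ k) (\<lambda>a. h_fun r a t) x)
     \<and> ((deriv ^^ k) (\<lambda>a. h_fun r a t) has_real_derivative (deriv ^^ Suc k) (\<lambda>a. h_fun r a t) x) (at x)"
proof -
  have I: "open {x::real. 6 * r^2 * \<bar>x\<bar> < 1}" by (intro open_Collect_less continuous_intros)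
  have r2: "r^2 \<le> 1/9" using assms(1,2) power_mono[of r "1/3" 2] by (simp add: power2_eq_square)
  have "6 * r^2 * \<bar>x\<bar> \<le> 6 * (1/9) * \<bar>x\<bar>" using r2 by (intro mult_right_mono) auto
  then have "6 * r^2 * \<bar>x\<bar> < 1" using x by linarith
  then have xI: "x \<in> {x::real. 6 * r^2 * \<bar>x\<bar> < 1}" by simp
  show ?thesis
    using real_higher_deriv_complex[OF HC_holo open_Sr I _ HC_real, where k=k] xI by auto
qed

lemma h_remainder_pos:
  assumes r0: "0 < r" and r1: "r \<le> 1/3" and t: "t \<ge> 0" and l: "l \<ge> 1"
  shows "\<bar>h_fun r 1 t - D2 l r t\<bar> \<le> 18 * 8^l * r^(2*l) * exp (- (t*r^2)/3)"
proof -
  define g where "g = (\<lambda>a. h_fun r a t)"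
  define \<rho> where "\<rho> = 1 / (8 * r^2)"
  define B0 where "B0 = 2 * exp (- (t*r^2)/3)"
  have r2: "r^2 \<le> 1/9" using r0 r1 power_mono[of r "1/3" 2] by (simp add: power2_eq_square)
  have r2p: "r^2 > 0" using r0 by simp
  have \<rho>1: "\<rho> > 1" unfolding \<rho>_def using r2 r2p by (simp add: field_simps)
  have sub: "cball 0 \<rho> \<subseteq> {a::complex. 6 * r^2 * norm a < 1}"
  proof
    fix a :: complex assume "a \<in> cball 0 \<rho>"
    then have "norm a \<le> \<rho>" by simp
    then have "6 * r^2 * norm a \<le> 6 * r^2 * \<rho>" using r2p by (intro mult_left_mono) auto
    also have "\<dots> < 1" unfolding \<rho>_def using r2p by (simp add: field_simps)
    finally show "a \<in> {a::complex. 6 * r^2 * norm a < 1}" by simp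
  qed
  have holb: "HC r t holomorphic_on ball 0 \<rho>"
    using HC_holo sub ball_subset_cball holomorphic_on_subset by blast
  have contc: "continuous_on (cball 0 \<rho>) (HC r t)"
    using HC_holo sub holomorphic_on_imp_continuous_on holomorphic_on_subset by blast
  have fin: "HC r t w \<in> ball 0 B0" if "w \<in> ball 0 \<rho>" for w
  proof -
    have "norm w < \<rho>" using that by simp
    then have "4 * r^2 * norm w \<le> 4 * r^2 * \<rho>" using r2p by (intro mult_left_mono) auto
    also have "\<dots> = 1/2" unfolding \<rho>_def using r2p by (simp add: field_simps)
    finally have "norm (HC r t w) \<le> sqrt 2 * exp (- (t*r^2)/3)" by (intro HC_bound t)
    also have "\<dots> < B0" unfolding B0_def
      by (intro mult_strict_right_mono) (auto simp: real_sqrt_less_iff[of 2 4, simplified])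
    finally show ?thesis by simp
  qed
  have cb: "cmod ((deriv ^^ n) (HC r t) 0) \<le> fact n * B0 / \<rho>^n" if "n > 0" for n
    by (rule Cauchy_higher_deriv_bound[OF holb contc fin]) (use \<rho>1 that in auto)
  define c where "c n = (deriv ^^ n) g 0 / fact n" for n
  have dv: "(deriv ^^ n) (HC r t) 0 = of_real ((deriv ^^ n) g 0)" for n
    using h_derivs[of r 0 n t] r0 r1 unfolding g_def by simp
  have ps: "(\<lambda>n. (deriv ^^ n) (HC r t) 0 / fact n * (1 - 0)^n) sums HC r t 1"
    by (rule holomorphic_power_series[OF holb]) (use \<rho>1 in simp)
  have "HC r t 1 = of_real (g 1)"
    using HC_real[of r 1 t] r2 unfolding g_def by simp
  then have "(\<lambda>n. complex_of_real (c n)) sums of_real (g 1)"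
    using ps unfolding c_def dv by simp
  then have cs: "c sums g 1" by (simp add: sums_of_real_iff)
  have D2e: "D2 l r t = (\<Sum>i<l. c i)" unfolding D2_def c_def g_def by (simp add: mult.commute)
  have sh: "(\<lambda>i. c (i + l)) sums (g 1 - D2 l r t)"
    unfolding D2e using cs by (simp add: sums_iff_shift)
  define q where "q = 1 / \<rho>"
  have q: "q = 8 * r^2" "0 < q" "q < 1" unfolding q_def \<rho>_def using \<rho>1 r2p by (auto simp: \<rho>_def)
  have gs: "(\<lambda>i. B0 * q^l * q^i) sums (B0 * q^l * (1 / (1 - q)))"
    by (intro sums_mult geometric_sums) (use q in auto)
  have bd: "norm (c (i + l)) \<le> B0 * q^l * q^i" for i
  proof -
    have "norm (c (i+l)) = cmod ((deriv ^^ (i+l)) (HC r t) 0) / fact (i+l)"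
      unfolding c_def dv by (simp add: norm_divide)
    also have "\<dots> \<le> (fact (i+l) * B0 / \<rho>^(i+l)) / fact (i+l)"
      by (intro divide_right_mono cb) (use l in auto)
    also have "\<dots> = B0 * q^l * q^i" unfolding q_def by (simp add: power_add field_simps)
    finally show ?thesis .
  qed
  have "\<bar>g 1 - D2 l r t\<bar> \<le> B0 * q^l * (1 / (1 - q))"
    using norm_suminf_le[of "\<lambda>i. c (i + l)", OF bd] gs sh
    by (simp add: sums_iff sums_unique)
  also have "\<dots> \<le> B0 * q^l * 9"
  proof -
    have "1 / (1 - q) \<le> 9" using q r2 by (simp add: field_simps)
    moreover have "B0 * q^l \<ge> 0" using q unfolding B0_def by simp
    ultimately show ?thesis by (intro mult_left_mono) auto
  qed
  also have "\<dots> = 18 * 8^l * r^(2*l) * exp (- (t*r^2)/3)"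
    unfolding B0_def q by (simp add: power_mult_distrib power_mult)
  finally show ?thesis unfolding g_def .
qed

lemma h_remainder:
  assumes r0: "0 \<le> r" and r1: "r \<le> 1/3" and t: "t > 0" and l: "l \<ge> 1"
  shows "\<bar>h_fun r 1 t - D2 l r t\<bar> \<le> 18 * 8^l * fact l * 6^l / t^l * exp (- (t*r^2)/6)"
proof (cases "r = 0")
  case True
  have hc: "(\<lambda>a. h_fun 0 a t) = (\<lambda>_. 1)" by (simp add: h_fun_def fun_eq_iff)
  have "D2 l 0 t = (\<Sum>k<l. 1 / fact k * (deriv ^^ k) (\<lambda>_. 1::real) 0)" unfolding D2_def hc ..
  also have "\<dots> = (\<Sum>k<l. if k = 0 then 1 else 0)"
    by (intro sum.cong refl) (auto simp: gr0_conv_Suc deriv_const_funpow)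
  also have "\<dots> = 1" using l by (simp add: sum.delta)
  finally show ?thesis using True t by (simp add: h_fun_def)
next
  case False
  then have rp: "r > 0" using r0 by simp
  have "\<bar>h_fun r 1 t - D2 l r t\<bar> \<le> 18 * 8^l * r^(2*l) * exp (- (t*r^2)/3)"
    by (rule h_remainder_pos[OF rp r1 _ l]) (use t in simp)
  also have "r^(2*l) = (t*r^2/6)^l * 6^l / t^l"
  proof -
    have "r^(2*l) = (r^2)^l" by (simp add: power_mult)
    also have "\<dots> = (t*r^2/6)^l * 6^l / t^l" using t by (simp add: power_mult_distrib power_divide)
    finally show ?thesis .
  qed
  also have "(t*r^2/6)^l \<le> fact l * exp (t*r^2/6)" by (rule pow_le_fact_exp) (use t in simp)
  then have "18 * 8^l * ((t*r^2/6)^l * 6^l / t^l) * exp (- (t*r^2)/3) \<le> 18 * 8^l * ((fact l * exp (t*r^2/6)) * 6^l / t^l) * exp (- (t*r^2)/3)"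
    using t by (intro mult_right_mono mult_left_mono divide_right_mono) auto
  also have "exp (t*r^2/6) * exp (- (t*r^2)/3) = exp (- (t*r^2)/6)" by (simp flip: exp_add)
  then have "18 * 8^l * ((fact l * exp (t*r^2/6)) * 6^l / t^l) * exp (- (t*r^2)/3) = 18 * 8^l * fact l * 6^l / t^l * exp (- (t*r^2)/6)"
    by (simp add: field_simps)
  finally show ?thesis .
qed


definition FC :: "real \<Rightarrow> real \<Rightarrow> complex \<Rightarrow> complex" where
  "FC r t c = CS t (of_real (r^2) - c)"

lemma FC_holo: "FC r t holomorphic_on UNIV"
proof -
  have "(\<lambda>c. complex_of_real (r^2) - c) holomorphic_on UNIV" by (intro holomorphic_intros)
  from holomorphic_on_compose[OF this holomorphic_on_subset[OF CS_holo]]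
  show ?thesis unfolding FC_def o_def by simp
qed

lemma f_derivs:
  "(deriv ^^ k) (FC r t) (of_real x) = of_real ((deriv ^^ k) (\<lambda>c. f_fun r c t) x)
     \<and> ((deriv ^^ k) (\<lambda>c. f_fun r c t) has_real_derivative (deriv ^^ Suc k) (\<lambda>c. f_fun r c t) x) (at x)"
proof -
  have eq: "FC r t (of_real y) = of_real (f_fun r y t)" for y
  proof -
    have "complex_of_real (r^2) - of_real y = of_real (r^2 - y)" by simp
    then show ?thesis unfolding FC_def f_fun_def by (simp only: CS_real)
  qed
  show ?thesis
    using real_higher_deriv_complex[OF FC_holo open_UNIV open_UNIV _ eq, of k] by auto
qed

lemma f_deriv_bound:
  assumes "0 \<le> r" "r \<le> 1/3" "t \<ge> 0" "n > 0"
  shows "\<bar>(deriv ^^ n) (\<lambda>c. f_fun r c t) 0\<bar> \<le> fact n * (2 * exp (12*t/25)) * 9^n"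
proof -
  define B0 where "B0 = 2 * exp (12*t/25)"
  have r2: "r^2 \<le> 1/9" using assms(1,2) power_mono[of r "1/3" 2] by (simp add: power2_eq_square)
  have holb: "FC r t holomorphic_on ball 0 (1/9)" using FC_holo holomorphic_on_subset by blast
  have contc: "continuous_on (cball 0 (1/9)) (FC r t)"
    using FC_holo holomorphic_on_imp_continuous_on holomorphic_on_subset by blast
  have sq: "sqrt (2/9) \<le> (12/25::real)"
  proof -
    have "sqrt (2/9) \<le> sqrt ((12/25)^2)" by (rule real_sqrt_le_mono) (simp add: power2_eq_square)
    then show ?thesis by simp
  qed
  have fin: "FC r t w \<in> ball 0 B0" if "w \<in> ball 0 (1/9)" for w
  proof -
    have "norm (complex_of_real (r^2) - w) \<le> norm (complex_of_real (r^2)) + norm w"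
      by (rule norm_triangle_ineq4)
    also have "\<dots> \<le> 2/9" using that r2 by (simp add: norm_power)
    finally have nw: "norm (complex_of_real (r^2) - w) \<le> 2/9" .
    have "norm (FC r t w) \<le> cosh (\<bar>t\<bar> * sqrt (norm (complex_of_real (r^2) - w)))"
      unfolding FC_def by (rule CS_bound)
    also have "\<dots> \<le> exp \<bar>\<bar>t\<bar> * sqrt (norm (complex_of_real (r^2) - w))\<bar>" by (rule cosh_le_exp)
    also have "\<dots> \<le> exp (t * (12/25))"
    proof -
      have "sqrt (norm (complex_of_real (r^2) - w)) \<le> sqrt (2/9)" using nw by (rule real_sqrt_le_mono)
      then have "sqrt (norm (complex_of_real (r^2) - w)) \<le> 12/25" using sq by linarith
      then have "t * sqrt (norm (complex_of_real (r^2) - w)) \<le> t * (12/25)"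
        using assms(3) by (intro mult_left_mono) auto
      then show ?thesis using assms(3) by simp
    qed
    also have "\<dots> < B0"
    proof -
      have e: "t * (12/25) = 12*t/25" by simp
      show ?thesis unfolding B0_def e by simp
    qed
    finally show ?thesis by simp
  qed
  have "cmod ((deriv ^^ n) (FC r t) 0) \<le> fact n * B0 / (1/9)^n"
    by (rule Cauchy_higher_deriv_bound[OF holb contc fin]) (use assms in auto)
  moreover have "(deriv ^^ n) (FC r t) 0 = of_real ((deriv ^^ n) (\<lambda>c. f_fun r c t) 0)"
    using f_derivs[of n r t 0] by simp
  ultimately show ?thesis unfolding B0_def by (simp add: power_divide)
qed

definition KW :: "nat \<Rightarrow> real" where
  "KW b = 4 * (\<Sum>k\<le>b-2. (1/4)^k / fact k * fact (k+1) * 9^(k+1))"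

lemma KW_nonneg: "KW b \<ge> 0" unfolding KW_def by (intro mult_nonneg_nonneg sum_nonneg) auto

lemma W2_bound:
  assumes "0 \<le> r" "r \<le> 1/3" "t \<ge> 1"
  shows "\<bar>W2 b r t\<bar> \<le> KW b * exp (12*t/25)"
proof (cases "b \<ge> 2")
  case False then show ?thesis using KW_nonneg by (simp add: W2_def)
next
  case True
  define S where "S = (\<Sum>k\<le>b-2. (1/4)^k / fact k * fact (k+1) * 9^(k+1) :: real)"
  have S0: "S \<ge> 0" unfolding S_def by (intro sum_nonneg) auto
  have "\<bar>(\<Sum>k\<le>b-2. (1/4)^k / fact k * (deriv ^^ (k+1)) (\<lambda>c. f_fun r c t) 0)\<bar>
      \<le> (\<Sum>k\<le>b-2. \<bar>(1/4)^k / fact k * (deriv ^^ (k+1)) (\<lambda>c. f_fun r c t) 0\<bar>)"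
    by (rule sum_abs)
  also have "\<dots> \<le> (\<Sum>k\<le>b-2. (1/4)^k / fact k * (fact (k+1) * (2 * exp (12*t/25)) * 9^(k+1)))"
  proof (intro sum_mono)
    fix k
    have "\<bar>(deriv ^^ (k+1)) (\<lambda>c. f_fun r c t) 0\<bar> \<le> fact (k+1) * (2 * exp (12*t/25)) * 9^(k+1)"
      by (rule f_deriv_bound) (use assms in auto)
    then show "\<bar>(1/4)^k / fact k * (deriv ^^ (k+1)) (\<lambda>c. f_fun r c t) 0\<bar> \<le> (1/4)^k / fact k * (fact (k+1) * (2 * exp (12*t/25)) * 9^(k+1))"
    proof -
      have "\<bar>(1/4)^k / fact k * (deriv ^^ (k+1)) (\<lambda>c. f_fun r c t) 0\<bar> = (1/4)^k / fact k * \<bar>(deriv ^^ (k+1)) (\<lambda>c. f_fun r c t) 0\<bar>"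
        by (simp add: abs_mult)
      also have "\<dots> \<le> (1/4)^k / fact k * (fact (k+1) * (2 * exp (12*t/25)) * 9^(k+1))"
        by (rule mult_left_mono[OF \<open>\<bar>(deriv ^^ (k+1)) (\<lambda>c. f_fun r c t) 0\<bar> \<le> _\<close>]) simp
      finally show ?thesis .
    qed
  qed
  also have "\<dots> = 2 * exp (12*t/25) * S" unfolding S_def sum_distrib_left
    by (intro sum.cong refl) (simp add: field_simps)
  finally have sb: "\<bar>(\<Sum>k\<le>b-2. (1/4)^k / fact k * (deriv ^^ (k+1)) (\<lambda>c. f_fun r c t) 0)\<bar> \<le> 2 * exp (12*t/25) * S" .
  have "\<bar>W2 b r t\<bar> = 2 / t * \<bar>(\<Sum>k\<le>b-2. (1/4)^k / fact k * (deriv ^^ (k+1)) (\<lambda>c. f_fun r c t) 0)\<bar>"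
    using True assms(3) by (simp add: W2_def abs_mult)
  also have "\<dots> \<le> 2 / t * (2 * exp (12*t/25) * S)" using assms(3) sb by (intro mult_left_mono) auto
  also have "\<dots> \<le> 2 * (2 * exp (12*t/25) * S)"
    using assms(3) S0 by (intro mult_right_mono) (auto simp: divide_simps)
  also have "\<dots> = KW b * exp (12*t/25)" unfolding KW_def S_def by simp
  finally show ?thesis .
qed

lemma sinc_decomp:
  assumes "0 \<le> r" "r \<le> 1/3" "t \<ge> 0"
  shows "exp (-t/2) * sinc_sqrt t (r^2 - 1/4) = h_fun r 1 t - exp (-t/2) * exp (- t * sqrt (1/4 - r^2)) / (2 * sqrt (1/4 - r^2))"
    and "\<bar>exp (-t/2) * exp (- t * sqrt (1/4 - r^2)) / (2 * sqrt (1/4 - r^2))\<bar> \<le> 2 * exp (-t/2)"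
proof -
  define q where "q = sqrt (1/4 - r^2)"
  have r2: "r^2 \<le> 1/9" using assms(1,2) power_mono[of r "1/3" 2] by (simp add: power2_eq_square)
  have q2: "q^2 = 1/4 - r^2" unfolding q_def using r2 by simp
  have q4: "q \<ge> 1/4"
  proof -
    have "sqrt ((1/4)^2) \<le> q" unfolding q_def using r2 by (intro real_sqrt_le_mono) (simp add: power2_eq_square)
    then show ?thesis by simp
  qed
  have qp: "q > 0" using q4 by simp
  have arg: "r^2 - 1/4 = -(q^2)" using q2 by simp
  have s1: "sqrt (1 - 4*1*r^2) = 2*q"
  proof -
    have "1 - 4*1*r^2 = (2*q)^2" using q2 by (simp add: power2_eq_square algebra_simps)
    then show ?thesis using qp by (simp add: real_sqrt_mult)
  qed
  have ex: "-t/2 + t*q = - (2*t*r^2) / (1 + 2*q)"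
  proof -
    have "(-t/2 + t*q) * (1 + 2*q) = -t/2 + 2*t*q^2" by (simp add: algebra_simps power2_eq_square)
    also have "\<dots> = - (2*t*r^2)" unfolding q2 by (simp add: algebra_simps)
    finally have "(-t/2 + t*q) * (1 + 2*q) = - (2*t*r^2)" .
    then show ?thesis using qp by (simp add: field_simps)
  qed
  have A: "exp (-t/2) * sinc_sqrt t (r^2 - 1/4) = exp (-t/2) * exp (t*q) / (2*q) - exp (-t/2) * exp (- t * q) / (2 * q)"
  proof -
    have A0: "sinc_sqrt t (r^2 - 1/4) = (exp (t*q) - exp (-(t*q))) / (2*q)"
      unfolding arg sinc_neg[OF qp[THEN less_imp_neq, symmetric]] by (simp add: sinh_field_def)
    show ?thesis unfolding A0 by (simp add: diff_divide_distrib right_diff_distrib)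
  qed
  have B: "exp (-t/2) * exp (t*q) / (2*q) = h_fun r 1 t"
    unfolding h_fun_def s1 ex[symmetric] exp_add by simp
  from A B have "exp (-t/2) * sinc_sqrt t (r^2 - 1/4) = h_fun r 1 t - exp (-t/2) * exp (- t * q) / (2 * q)" by simp
  then show "exp (-t/2) * sinc_sqrt t (r^2 - 1/4) = h_fun r 1 t - exp (-t/2) * exp (- t * sqrt (1/4 - r^2)) / (2 * sqrt (1/4 - r^2))"
    unfolding q_def .
  have tq: "t * q \<ge> 0" using qp assms(3) by simp
  have "exp (- t * q) \<le> 1" using tq by simp
  then have le: "exp (-t/2) * exp (- t * q) / (2 * q) \<le> exp (-t/2) * 1 / (2 * (1/4))"
    using qp q4 by (intro divide_mono mult_left_mono) auto
  have nn: "exp (-t/2) * exp (- t * q) / (2 * q) \<ge> 0" using qp by simp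
  have "\<bar>exp (-t/2) * exp (- t * q) / (2 * q)\<bar> \<le> 2 * exp (-t/2)"
    using le nn by simp
  then show "\<bar>exp (-t/2) * exp (- t * sqrt (1/4 - r^2)) / (2 * sqrt (1/4 - r^2))\<bar> \<le> 2 * exp (-t/2)"
    unfolding q_def .
qed


lemma measurable_higher_deriv:
  fixes \<phi> :: "real \<Rightarrow> real \<Rightarrow> real"
  assumes meas: "(\<lambda>p. \<phi> (fst p) (snd p)) \<in> borel_measurable borel"
   and der: "\<And>x a k. x \<in> X \<Longrightarrow> A < a \<Longrightarrow> a < B \<Longrightarrow>
       ((deriv ^^ k) (\<phi> x) has_real_derivative (deriv ^^ Suc k) (\<phi> x) a) (at a)"
  shows "\<exists>G. G \<in> borel_measurable borel \<and> (\<forall>x\<in>X. \<forall>a. A < a \<and> a < B \<longrightarrow> G (x,a) = (deriv ^^ k) (\<phi> x) a)"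
proof (induction k)
  case 0
  show ?case by (rule exI[of _ "\<lambda>p. \<phi> (fst p) (snd p)"]) (use meas in auto)
next
  case (Suc k)
  then obtain G where G: "G \<in> borel_measurable borel"
    and GE: "\<And>x a. x \<in> X \<Longrightarrow> A < a \<Longrightarrow> a < B \<Longrightarrow> G (x,a) = (deriv ^^ k) (\<phi> x) a" by blast
  define G' where "G' p = lim (\<lambda>n. (G (fst p, snd p + inverse (real (Suc n))) - G p) * real (Suc n))" for p
  have "G' \<in> borel_measurable borel"
    unfolding G'_def
  proof (rule borel_measurable_lim_metric)
    fix n
    have "(\<lambda>p::real\<times>real. (fst p, snd p + inverse (real (Suc n)))) \<in> borel_measurable borel"
      by (intro borel_measurable_continuous_onI continuous_intros)
    then have "(\<lambda>p. G (fst p, snd p + inverse (real (Suc n)))) \<in> borel_measurable borel"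
      using measurable_compose[OF _ G] by (simp add: o_def)
    then show "(\<lambda>p. (G (fst p, snd p + inverse (real (Suc n))) - G p) * real (Suc n)) \<in> borel_measurable borel"
      using G by measurable
  qed
  moreover have "G' (x,a) = (deriv ^^ Suc k) (\<phi> x) a" if x: "x \<in> X" and a: "A < a" "a < B" for x a
  proof -
    define f where "f = (deriv ^^ k) (\<phi> x)"
    define h where "h n = inverse (real (Suc n))" for n
    have d: "(f has_real_derivative (deriv ^^ Suc k) (\<phi> x) a) (at a)" unfolding f_def by (rule der[OF x a])
    then have L: "((\<lambda>y. (f (a + y) - f a) / y) \<longlongrightarrow> (deriv ^^ Suc k) (\<phi> x) a) (at 0)"
      by (simp add: DERIV_def)
    have h0: "h \<longlonglongrightarrow> 0" unfolding h_def by (rule LIMSEQ_inverse_real_of_nat)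
    have hf: "filterlim h (at 0) sequentially"
      unfolding filterlim_at using h0 by (auto simp: h_def)
    have L2: "(\<lambda>n. (f (a + h n) - f a) / h n) \<longlonglongrightarrow> (deriv ^^ Suc k) (\<phi> x) a"
      using filterlim_compose[OF L hf] by (simp add: o_def)
    have ev: "eventually (\<lambda>n. h n < B - a) sequentially"
      using h0 a by (intro order_tendstoD) auto
    have ev2: "eventually (\<lambda>n. (f (a + h n) - f a) / h n = (G (x, a + h n) - G (x,a)) * real (Suc n)) sequentially"
      using ev
    proof eventually_elim
      case (elim n)
      have "h n > 0" unfolding h_def by simp
      then have "G (x, a + h n) = f (a + h n)" "G (x,a) = f a" unfolding f_def
        using GE[OF x] a elim by auto
      then show ?case by (simp add: h_def divide_inverse)
    qed
    have "(\<lambda>n. (G (x, a + h n) - G (x,a)) * real (Suc n)) \<longlonglongrightarrow> (deriv ^^ Suc k) (\<phi> x) a"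
      by (rule Lim_transform_eventually[OF L2 ev2])
    then show ?thesis unfolding G'_def h_def by (simp add: limI)
  qed
  ultimately show ?case by blast
qed

lemma gauss_1d: assumes "c > 0"
  shows "(\<integral>\<^sup>+y. ennreal (exp (- c * y^2)) \<partial>lborel) = ennreal (sqrt (pi / c))"
proof -
  define sg where "sg = sqrt (1 / (2*c))"
  have sp: "sg > 0" unfolding sg_def using assms by simp
  have s2: "sg^2 = 1/(2*c)" unfolding sg_def using assms by simp
  have eq: "exp (- c * y^2) = sqrt (pi / c) * normal_density 0 sg y" for y
  proof -
    have e1: "2 * pi * sg^2 = pi / c" unfolding s2 using assms by (simp add: field_simps)
    have e2: "exp (- c * y^2) = exp (-(y - 0)\<^sup>2 / (2 * sg\<^sup>2))" unfolding s2 using assms by (simp add: field_simps)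
    show ?thesis unfolding normal_density_def e1 e2 using assms by (simp add: real_sqrt_divide)
  qed
  have "(\<integral>\<^sup>+y. ennreal (exp (- c * y^2)) \<partial>lborel) = (\<integral>\<^sup>+y. ennreal (sqrt (pi / c)) * ennreal (normal_density 0 sg y) \<partial>lborel)"
    unfolding eq using assms by (intro nn_integral_cong) (simp add: ennreal_mult)
  also have "\<dots> = ennreal (sqrt (pi / c)) * (\<integral>\<^sup>+y. ennreal (normal_density 0 sg y) \<partial>lborel)"
    by (rule nn_integral_cmult) simp
  also have "(\<integral>\<^sup>+y. ennreal (normal_density 0 sg y) \<partial>lborel) = ennreal (\<integral>y. normal_density 0 sg y \<partial>lborel)"
    using sp by (intro nn_integral_eq_integral integrable_normal_density) auto
  also have "\<dots> = 1" using sp by simp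
  finally show ?thesis by simp
qed

lemma gauss_nd: assumes "c > 0"
  shows "(\<integral>\<^sup>+x. ennreal (exp (- c * (norm (x::real^'n))^2)) \<partial>lborel) = ennreal (sqrt (pi / c) ^ CARD('n))"
proof -
  have e: "ennreal (exp (- c * (norm x)^2)) = (\<Prod>b\<in>Basis. ennreal (exp (- c * (x \<bullet> b)^2)))" for x :: "real^'n"
  proof -
    have "(norm x)^2 = (\<Sum>b\<in>Basis. (x \<bullet> b)^2)"
      unfolding power2_norm_eq_inner by (subst euclidean_inner) (simp add: power2_eq_square)
    then have "exp (- c * (norm x)^2) = (\<Prod>b\<in>Basis. exp (- c * (x \<bullet> b)^2))"
      by (simp add: sum_distrib_left exp_sum)
    then show ?thesis by (simp add: prod_ennreal)
  qed
  have "(\<integral>\<^sup>+x. ennreal (exp (- c * (norm (x::real^'n))^2)) \<partial>lborel) = (\<Prod>b\<in>(Basis::(real^'n) set). (\<integral>\<^sup>+y. ennreal (exp (- c * y^2)) \<partial>lborel))"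
    unfolding e by (rule nn_integral_lborel_prod) auto
  also have "\<dots> = (\<Prod>b\<in>(Basis::(real^'n) set). ennreal (sqrt (pi / c)))" using gauss_1d[OF assms] by simp
  also have "\<dots> = ennreal (sqrt (pi / c) ^ CARD('n))" using assms by (simp add: ennreal_power)
  finally show ?thesis .
qed


lemma exp_neg_le_pow: assumes "(t::real) > 0" shows "exp (- t/100) \<le> fact l * 100^l / t^l"
proof -
  have "(t/100)^l \<le> fact l * exp (t/100)" by (rule pow_le_fact_exp) (use assms in simp)
  then have "t^l \<le> fact l * 100^l * exp (t/100)" by (simp add: power_divide field_simps)
  then have "t^l * exp (- t/100) \<le> fact l * 100^l" by (simp add: field_simps exp_minus)
  then show ?thesis using assms by (simp add: field_simps)
qed

lemma m2_pointwise:
  fixes \<xi> :: "real^'n"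
  assumes chi0: "\<And>r. r \<ge> 1/3 \<Longrightarrow> chiL r = 0"
    and chiB: "\<And>r. 0 \<le> r \<Longrightarrow> r \<le> 1/3 \<Longrightarrow> \<bar>chiL r\<bar> \<le> Bc"
    and t: "t \<ge> 1" and l: "l \<ge> 1"
  shows "\<bar>m2 chiL b l \<xi> t\<bar> \<le> Bc * (18 * 8^l * fact l * 6^l + (2 + KW b) * (fact l * 100^l)) / t^l * exp (- (t/12) * (norm \<xi>)^2)"
proof -
  define r where "r = norm \<xi>"
  have Bc: "Bc \<ge> 0" using chiB[of 0] by simp
  have KW0: "KW b \<ge> 0" by (rule KW_nonneg)
  define K where "K = Bc * (18 * 8^l * fact l * 6^l + (2 + KW b) * (fact l * 100^l))"
  have K0: "K \<ge> 0" unfolding K_def using Bc KW0 by simp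
  show ?thesis
  proof (cases "r < 1/3")
    case False
    then have "m2 chiL b l \<xi> t = 0" unfolding m2_def r_def[symmetric] using chi0 by simp
    then show ?thesis using Bc KW0 t by simp
  next
    case True
    have r0: "0 \<le> r" unfolding r_def by simp
    have r1: "r \<le> 1/3" using True by simp
    have r2: "r^2 \<le> 1/9" using r0 r1 power_mono[of r "1/3" 2] by (simp add: power2_eq_square)
    define E where "E = exp (-t/2) * exp (- t * sqrt (1/4 - r^2)) / (2 * sqrt (1/4 - r^2))"
    have sd: "exp (-t/2) * sinc_sqrt t (r^2 - 1/4) = h_fun r 1 t - E"
      unfolding E_def by (rule sinc_decomp(1)) (use r0 r1 t in auto)
    have Eb: "\<bar>E\<bar> \<le> 2 * exp (-t/2)"
      unfolding E_def by (rule sinc_decomp(2)) (use r0 r1 t in auto)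
    have hb: "\<bar>h_fun r 1 t - D2 l r t\<bar> \<le> 18 * 8^l * fact l * 6^l / t^l * exp (- (t*r^2)/6)"
      by (rule h_remainder) (use r0 r1 t l in auto)
    have Wb: "\<bar>W2 b r t\<bar> \<le> KW b * exp (12*t/25)"
      by (rule W2_bound) (use r0 r1 t in auto)
    have "m2 chiL b l \<xi> t = chiL r * ((h_fun r 1 t - D2 l r t) - E - exp (-t/2) * W2 b r t)"
      unfolding m2_def r_def[symmetric] sd by (simp add: algebra_simps)
    then have "\<bar>m2 chiL b l \<xi> t\<bar> = \<bar>chiL r\<bar> * \<bar>(h_fun r 1 t - D2 l r t) - E - exp (-t/2) * W2 b r t\<bar>"
      by (simp add: abs_mult)
    also have "\<dots> \<le> Bc * (18 * 8^l * fact l * 6^l / t^l * exp (- (t*r^2)/6) + 2 * exp (-t/2) + exp (-t/2) * (KW b * exp (12*t/25)))"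
    proof (rule mult_mono)
      show "\<bar>chiL r\<bar> \<le> Bc" using chiB r0 r1 by simp
      have "\<bar>exp (-t/2) * W2 b r t\<bar> \<le> exp (-t/2) * (KW b * exp (12*t/25))"
        unfolding abs_mult abs_exp_cancel using Wb by (intro mult_left_mono) auto
      then show "\<bar>(h_fun r 1 t - D2 l r t) - E - exp (-t/2) * W2 b r t\<bar> \<le> 18 * 8^l * fact l * 6^l / t^l * exp (- (t*r^2)/6) + 2 * exp (-t/2) + exp (-t/2) * (KW b * exp (12*t/25))"
        using hb Eb by linarith
    qed (use Bc in auto)
    also have "\<dots> \<le> Bc * (18 * 8^l * fact l * 6^l / t^l * exp (- (t/12) * r^2) + (2 + KW b) * (fact l * 100^l / t^l) * exp (- (t/12) * r^2))"
    proof (rule mult_left_mono[OF _ Bc])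
      have tp: "t > 0" using t by simp
      have a1: "exp (- (t*r^2)/6) \<le> exp (- (t/12) * r^2)" using tp by (simp add: field_simps)
      have a2: "exp (-t/2) \<le> exp (- t/50)" using tp by simp
      have a3: "exp (-t/2) * exp (12*t/25) = exp (- t/50)" by (simp flip: exp_add)
      have a4: "exp (- t/50) \<le> exp (- t/100) * exp (- (t/12) * r^2)"
      proof -
        have "t * r^2 \<le> t * (1/9)" using r2 tp by (intro mult_left_mono) auto
        moreover have e: "(t/12)*r^2 = (t*r^2)/12" by simp
        ultimately have "- t/50 \<le> - t/100 + - (t/12) * r^2" using tp unfolding e by linarith
        then show ?thesis by (simp flip: exp_add)
      qed
      have a5: "exp (- t/100) \<le> fact l * 100^l / t^l" by (rule exp_neg_le_pow[OF tp])
      have a6: "exp (- t/50) \<le> (fact l * 100^l / t^l) * exp (- (t/12) * r^2)"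
        using a4 a5 by (smt (verit) exp_gt_zero mult_right_mono)
      have "18 * 8^l * fact l * 6^l / t^l * exp (- (t*r^2)/6) \<le> 18 * 8^l * fact l * 6^l / t^l * exp (- (t/12) * r^2)"
        using a1 tp by (intro mult_left_mono) auto
      moreover have "2 * exp (-t/2) + exp (-t/2) * (KW b * exp (12*t/25)) \<le> (2 + KW b) * exp (- t/50)"
        using a2 a3 KW0 by (simp add: algebra_simps)
      moreover have "(2 + KW b) * exp (- t/50) \<le> (2 + KW b) * ((fact l * 100^l / t^l) * exp (- (t/12) * r^2))"
        using a6 KW0 by (intro mult_left_mono) auto
      ultimately show "18 * 8^l * fact l * 6^l / t^l * exp (- (t*r^2)/6) + 2 * exp (-t/2) + exp (-t/2) * (KW b * exp (12*t/25))
          \<le> 18 * 8^l * fact l * 6^l / t^l * exp (- (t/12) * r^2) + (2 + KW b) * (fact l * 100^l / t^l) * exp (- (t/12) * r^2)"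
        by (simp add: algebra_simps)
    qed
    also have "\<dots> = Bc * (18 * 8^l * fact l * 6^l + (2 + KW b) * (fact l * 100^l)) / t^l * exp (- (t/12) * (norm \<xi>)^2)"
      unfolding r_def by (simp add: add_divide_distrib algebra_simps)
    finally show ?thesis .
  qed
qed


lemma smooth_cont: assumes "smooth_on_real S g" shows "continuous_on S g"
proof -
  obtain D where D0: "D 0 = g" and D: "\<And>k x. x \<in> S \<Longrightarrow> (D k has_real_derivative D (Suc k) x) (at x within S)"
    using assms unfolding smooth_on_real_def by blast
  show ?thesis unfolding continuous_on_eq_continuous_within
    using DERIV_continuous[OF D[of _ 0]] D0 by auto
qed

lemma m2_measurable:
  fixes chiL :: "real \<Rightarrow> real"
  assumes cont: "continuous_on {0..} chiL" and chi0: "\<And>r. r \<ge> 1/3 \<Longrightarrow> chiL r = 0" and t: "t \<ge> 1"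
  shows "(\<lambda>\<xi>::real^'n. m2 chiL b l \<xi> t) \<in> borel_measurable borel"
proof -
  have "\<forall>k. \<exists>G. G \<in> borel_measurable borel \<and> (\<forall>x\<in>{0..1/3}. \<forall>a. -1 < a \<and> a < 1 \<longrightarrow> G (x,a) = (deriv ^^ k) (\<lambda>a. h_fun x a t) a)"
  proof
    fix k
    show "\<exists>G. G \<in> borel_measurable borel \<and> (\<forall>x\<in>{0..1/3}. \<forall>a. -1 < a \<and> a < 1 \<longrightarrow> G (x,a) = (deriv ^^ k) (\<lambda>a. h_fun x a t) a)"
    proof (rule measurable_higher_deriv[where \<phi>="\<lambda>x a. h_fun x a t"])
      have "(\<lambda>p. h_fun (fst p) (snd p) t) \<in> borel_measurable (borel \<Otimes>\<^sub>M borel)"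
        unfolding h_fun_def by measurable
      then show "(\<lambda>p. h_fun (fst p) (snd p) t) \<in> borel_measurable borel" by (simp add: borel_prod)
      fix x a :: real and k :: nat assume "x \<in> {0..1/3::real}" "-1 < a" "a < 1"
      then show "((deriv ^^ k) (\<lambda>a. h_fun x a t) has_real_derivative (deriv ^^ Suc k) (\<lambda>a. h_fun x a t) a) (at a)"
        using h_derivs[of x a k t] by auto
    qed
  qed
  from choice[OF this] obtain GD where GDall: "\<forall>k. GD k \<in> borel_measurable borel \<and> (\<forall>x\<in>{0..1/3}. \<forall>a. -1 < a \<and> a < 1 \<longrightarrow> GD k (x,a) = (deriv ^^ k) (\<lambda>a. h_fun x a t) a)"
    by blast
  have GD: "\<And>k. GD k \<in> borel_measurable borel" using GDall by blast
  have GDe: "\<And>k x a. x \<in> {0..1/3} \<Longrightarrow> -1 < a \<Longrightarrow> a < 1 \<Longrightarrow> GD k (x,a) = (deriv ^^ k) (\<lambda>a. h_fun x a t) a"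
    using GDall by blast
  have "\<forall>k. \<exists>G. G \<in> borel_measurable borel \<and> (\<forall>x\<in>UNIV. \<forall>a. -1 < a \<and> a < 1 \<longrightarrow> G (x,a) = (deriv ^^ k) (\<lambda>c. f_fun x c t) a)"
  proof
    fix k
    show "\<exists>G. G \<in> borel_measurable borel \<and> (\<forall>x\<in>UNIV. \<forall>a. -1 < a \<and> a < 1 \<longrightarrow> G (x,a) = (deriv ^^ k) (\<lambda>c. f_fun x c t) a)"
    proof (rule measurable_higher_deriv[where \<phi>="\<lambda>x c. f_fun x c t"])
      have cc: "continuous_on UNIV (CS t)" using CS_holo holomorphic_on_imp_continuous_on by blast
      have "(\<lambda>p::real\<times>real. Re (CS t (of_real (fst p ^ 2 - snd p)))) \<in> borel_measurable borel"
        by (intro borel_measurable_continuous_onI continuous_intros continuous_on_compose2[OF cc]) auto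
      moreover have "f_fun (fst p) (snd p) t = Re (CS t (of_real (fst p ^ 2 - snd p)))" for p :: "real \<times> real"
        unfolding f_fun_def CS_real by simp
      ultimately show "(\<lambda>p. f_fun (fst p) (snd p) t) \<in> borel_measurable borel" by simp
      fix x a k
      show "((deriv ^^ k) (\<lambda>c. f_fun x c t) has_real_derivative (deriv ^^ Suc k) (\<lambda>c. f_fun x c t) a) (at a)"
        using f_derivs[of k x t a] by auto
    qed
  qed
  from choice[OF this] obtain GW where GWall: "\<forall>k. GW k \<in> borel_measurable borel \<and> (\<forall>x\<in>UNIV. \<forall>a. -1 < a \<and> a < 1 \<longrightarrow> GW k (x,a) = (deriv ^^ k) (\<lambda>c. f_fun x c t) a)"
    by blast
  have GW: "\<And>k. GW k \<in> borel_measurable borel" using GWall by blast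
  have GWe: "\<And>k x a. -1 < a \<Longrightarrow> a < 1 \<Longrightarrow> GW k (x,a) = (deriv ^^ k) (\<lambda>c. f_fun x c t) a"
    using GWall by blast
  have pm: "(\<lambda>r::real. (r, 0::real)) \<in> borel_measurable borel"
    by (intro borel_measurable_continuous_onI continuous_intros)
  have GD1[measurable]: "(\<lambda>r. GD k (r, 0)) \<in> borel_measurable borel" for k
    using measurable_compose[OF pm GD] by (simp add: o_def)
  have GW1[measurable]: "(\<lambda>r. GW k (r, 0)) \<in> borel_measurable borel" for k
    using measurable_compose[OF pm GW] by (simp add: o_def)
  define chi' where "chi' r = chiL (max 0 r)" for r
  have "continuous_on UNIV chi'" unfolding chi'_def
    by (rule continuous_on_compose2[OF cont]) (auto intro: continuous_intros)
  then have chim[measurable]: "chi' \<in> borel_measurable borel" by (rule borel_measurable_continuous_onI)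
  define M where "M r = (if r < 1/3 then chi' r * ((h_fun r 1 t - exp (-t/2) * exp (- t * sqrt (1/4 - r^2)) / (2 * sqrt (1/4 - r^2)))
      - exp (-t/2) * (if b \<ge> 2 then 2 / t * (\<Sum>k\<le>b-2. (1/4)^k / fact k * GW (k+1) (r,0)) else 0)
      - (\<Sum>k<l. 1 / fact k * GD k (r,0))) else 0)" for r
  have Mm: "M \<in> borel_measurable borel" unfolding M_def h_fun_def by measurable
  have "m2 chiL b l \<xi> t = M (norm \<xi>)" for \<xi> :: "real^'n"
  proof (cases "norm \<xi> < 1/3")
    case False
    then show ?thesis unfolding M_def m2_def using chi0 by simp
  next
    case True
    define r where "r = norm \<xi>"
    have r0: "0 \<le> r" "r \<le> 1/3" using True unfolding r_def by auto
    have "W2 b r t = (if b \<ge> 2 then 2 / t * (\<Sum>k\<le>b-2. (1/4)^k / fact k * GW (k+1) (r,0)) else 0)"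
      unfolding W2_def using GWe[of 0] by simp
    moreover have "D2 l r t = (\<Sum>k<l. 1 / fact k * GD k (r,0))"
      unfolding D2_def using GDe[of r 0] r0 by simp
    moreover have "chi' r = chiL r" unfolding chi'_def using r0 by simp
    moreover have "exp (-t/2) * sinc_sqrt t (r^2 - 1/4) = h_fun r 1 t - exp (-t/2) * exp (- t * sqrt (1/4 - r^2)) / (2 * sqrt (1/4 - r^2))"
      by (rule sinc_decomp(1)) (use r0 t in auto)
    ultimately show ?thesis unfolding M_def m2_def r_def[symmetric] using True r_def by simp
  qed
  then have "(\<lambda>\<xi>::real^'n. m2 chiL b l \<xi> t) = (\<lambda>\<xi>. M (norm \<xi>))" by auto
  moreover have "(\<lambda>\<xi>::real^'n. M (norm \<xi>)) \<in> borel_measurable borel"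
    using Mm by measurable
  ultimately show ?thesis by simp
qed


theorem proposition4:
  fixes chiL :: "real \<Rightarrow> real" and b l :: nat
  assumes "b \<ge> 1" and "l \<ge> 1"
    and "smooth_on_real {0..} chiL"
    and "\<And>r. r \<ge> 1/3 \<Longrightarrow> chiL r = 0"
    and "\<And>r. 0 \<le> r \<Longrightarrow> r \<le> 1/4 \<Longrightarrow> chiL r = 1"
  shows "\<exists>C>0. \<forall>t\<ge>1.
    integrable lborel (\<lambda>\<xi>::real^'n. (m2 chiL b l \<xi> t)^2) \<and>
    sqrt (\<integral>\<xi>. (m2 chiL b l (\<xi>::real^'n) t)^2 \<partial>lborel)
      \<le> (if b \<ge> 2 then C * t ^ (2*(b-1)-1) * exp (-t/2) + C * t powr (- real CARD('n) / 4 - real l)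
         else C * exp (-t/2) + C * t powr (- real CARD('n) / 4 - real l))"
proof -
  have cont: "continuous_on {0..} chiL" by (rule smooth_cont[OF assms(3)])
  have "compact (chiL ` {0..1/3})"
    by (rule compact_continuous_image[OF continuous_on_subset[OF cont]]) auto
  then obtain B0 where B0: "\<forall>y \<in> chiL ` {0..1/3}. norm y \<le> B0"
    using compact_imp_bounded bounded_iff by metis
  define Bc where "Bc = max B0 1"
  have chiB: "\<bar>chiL r\<bar> \<le> Bc" if "0 \<le> r" "r \<le> 1/3" for r
  proof -
    have "chiL r \<in> chiL ` {0..1/3}" using that by auto
    then have "norm (chiL r) \<le> B0" using B0 by blast
    then show ?thesis unfolding Bc_def by simp
  qed
  have Bc1: "Bc \<ge> 1" unfolding Bc_def by simp
  define K where "K = Bc * (18 * 8^l * fact l * 6^l + (2 + KW b) * (fact l * 100^l))"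
  have Kp: "K > 0" unfolding K_def using Bc1 KW_nonneg[of b]
    by (intro mult_pos_pos add_pos_nonneg) auto
  define N where "N = real CARD('n)"
  define C where "C = K * (6*pi) powr (N/4)"
  have Cp: "C > 0" unfolding C_def using Kp by simp
  have main: "integrable lborel (\<lambda>\<xi>::real^'n. (m2 chiL b l \<xi> t)^2) \<and>
    sqrt (\<integral>\<xi>. (m2 chiL b l (\<xi>::real^'n) t)^2 \<partial>lborel) \<le> C * t powr (- N / 4 - real l)"
    if t: "t \<ge> 1" for t
  proof -
    have tp: "t > 0" using t by simp
    define f where "f \<xi> = (m2 chiL b l (\<xi>::real^'n) t)^2" for \<xi>
    have mm: "(\<lambda>\<xi>::real^'n. m2 chiL b l \<xi> t) \<in> borel_measurable borel"
      by (rule m2_measurable[OF cont assms(4) t])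
    have fm: "f \<in> borel_measurable lborel" unfolding f_def using mm by simp
    have f0: "f \<xi> \<ge> 0" for \<xi> unfolding f_def by simp
    have fb: "f \<xi> \<le> (K/t^l)^2 * exp (- (t/6) * (norm \<xi>)^2)" for \<xi>
    proof -
      have pw: "\<bar>m2 chiL b l \<xi> t\<bar> \<le> K / t^l * exp (- (t/12) * (norm \<xi>)^2)"
        using m2_pointwise[OF assms(4) chiB t assms(2), where b=b and \<xi>=\<xi>] unfolding K_def by simp
      have "f \<xi> = \<bar>m2 chiL b l \<xi> t\<bar>^2" unfolding f_def by simp
      also have "\<dots> \<le> (K / t^l * exp (- (t/12) * (norm \<xi>)^2))^2"
        by (rule power_mono[OF pw]) simp
      also have "\<dots> = (K/t^l)^2 * (exp (- (t/12) * (norm \<xi>)^2))^2" by (rule power_mult_distrib)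
      also have "(exp (- (t/12) * (norm \<xi>)^2))^2 = exp (- (t/6) * (norm \<xi>)^2)"
        by (simp add: power2_eq_square flip: exp_add)
      finally show ?thesis .
    qed
    define V where "V = (K/t^l)^2 * sqrt (pi / (t/6)) ^ CARD('n)"
    have V0: "V \<ge> 0" unfolding V_def using tp by simp
    have gm[measurable]: "(\<lambda>\<xi>::real^'n. exp (- (t/6) * (norm \<xi>)^2)) \<in> borel_measurable borel" by measurable
    have "(\<integral>\<^sup>+\<xi>. ennreal (f \<xi>) \<partial>lborel) \<le> (\<integral>\<^sup>+\<xi>. ennreal ((K/t^l)^2) * ennreal (exp (- (t/6) * (norm (\<xi>::real^'n))^2)) \<partial>lborel)"
      by (intro nn_integral_mono) (use fb in \<open>simp add: ennreal_mult[symmetric] ennreal_leI\<close>)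
    also have "\<dots> = ennreal ((K/t^l)^2) * (\<integral>\<^sup>+\<xi>. ennreal (exp (- (t/6) * (norm (\<xi>::real^'n))^2)) \<partial>lborel)"
      by (rule nn_integral_cmult) measurable
    also have "\<dots> = ennreal ((K/t^l)^2) * ennreal (sqrt (pi / (t/6)) ^ CARD('n))"
      using gauss_nd[of "t/6", where 'n='n] tp by simp
    also have "\<dots> = ennreal V" unfolding V_def using tp by (simp add: ennreal_mult[symmetric])
    finally have nn: "(\<integral>\<^sup>+\<xi>. ennreal (f \<xi>) \<partial>lborel) \<le> ennreal V" .
    have int: "integrable lborel f"
    proof (rule integrableI_bounded[OF fm])
      have "(\<integral>\<^sup>+\<xi>. ennreal (norm (f \<xi>)) \<partial>lborel) = (\<integral>\<^sup>+\<xi>. ennreal (f \<xi>) \<partial>lborel)"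
        using f0 by simp
      also have "\<dots> < \<infinity>" using nn by (simp add: le_less_trans)
      finally show "(\<integral>\<^sup>+\<xi>. ennreal (norm (f \<xi>)) \<partial>lborel) < \<infinity>" .
    qed
    have I: "(\<integral>\<xi>. f \<xi> \<partial>lborel) \<le> V"
      unfolding integral_eq_nn_integral[OF fm AE_I2[OF f0]] by (rule enn2real_leI[OF V0 nn])
    have "sqrt (\<integral>\<xi>. f \<xi> \<partial>lborel) \<le> sqrt V" using I by (rule real_sqrt_le_mono)
    also have "sqrt V = C * t powr (- N / 4 - real l)"
    proof -
      define a where "a = 6 * pi / t"
      have ap: "a > 0" unfolding a_def using tp by simp
      have e1: "pi / (t/6) = a" unfolding a_def by simp
      have e2: "sqrt a ^ CARD('n) = a powr (N/2)"
      proof -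
        have "sqrt a ^ CARD('n) = sqrt a powr N" unfolding N_def using ap by (simp add: powr_realpow)
        also have "\<dots> = (a powr (1/2)) powr N" using ap by (simp add: powr_half_sqrt)
        also have "\<dots> = a powr (N/2)" by (simp add: powr_powr)
        finally show ?thesis .
      qed
      have e3: "sqrt (a powr (N/2)) = a powr (N/4)"
      proof -
        have "sqrt (a powr (N/2)) = (a powr (N/2)) powr (1/2)" by (rule powr_half_sqrt[symmetric]) simp
        also have "\<dots> = a powr (N/2 * (1/2))" by (rule powr_powr)
        also have "N/2 * (1/2) = N/4" by simp
        finally show ?thesis .
      qed
      have e4: "a powr (N/4) = (6*pi) powr (N/4) * t powr (-(N/4))"
      proof -
        have "a powr (N/4) = (6*pi) powr (N/4) / t powr (N/4)" unfolding a_def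
          by (rule powr_divide)
        also have "\<dots> = (6*pi) powr (N/4) * t powr (-(N/4))"
          unfolding powr_minus divide_inverse ..
        finally show ?thesis .
      qed
      have e5: "K / t^l = K * t powr (- real l)"
      proof -
        have "t powr (- real l) = inverse (t powr real l)" by (rule powr_minus)
        also have "t powr real l = t^l" using tp by (rule powr_realpow)
        finally show ?thesis by (simp add: divide_inverse)
      qed
      have sK: "sqrt ((K/t^l)^2) = K/t^l" using Kp tp by simp
      have "sqrt V = K / t^l * a powr (N/4)"
        unfolding V_def e1 e2 real_sqrt_mult e3 sK ..
      also have "\<dots> = K * (6*pi) powr (N/4) * (t powr (- real l) * t powr (-(N/4)))"
        unfolding e4 e5 by (simp only: ac_simps)
      also have "t powr (- real l) * t powr (-(N/4)) = t powr (- real l + -(N/4))"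
        by (rule powr_add[symmetric])
      also have "- real l + -(N/4) = - N / 4 - real l" by simp
      finally show ?thesis unfolding C_def .
    qed
    finally show ?thesis using int unfolding f_def by simp
  qed
  show ?thesis
  proof (intro exI[of _ C] conjI allI impI Cp)
    fix t :: real assume t: "t \<ge> 1"
    from main[OF t] show "integrable lborel (\<lambda>\<xi>::real^'n. (m2 chiL b l \<xi> t)^2)" by blast
    have nn1: "C * t ^ (2*(b-1)-1) * exp (-t/2) \<ge> 0" "C * exp (-t/2) \<ge> 0" using Cp t by auto
    from main[OF t] nn1 show "sqrt (\<integral>\<xi>. (m2 chiL b l (\<xi>::real^'n) t)^2 \<partial>lborel)
      \<le> (if b \<ge> 2 then C * t ^ (2*(b-1)-1) * exp (-t/2) + C * t powr (- real CARD('n) / 4 - real l)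
         else C * exp (-t/2) + C * t powr (- real CARD('n) / 4 - real l))"
      unfolding N_def by auto
  qed
qed


end
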